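(* Let $N\ge3$ be odd, $K=\tilde F(N)$, and let $\mathcal{F}$ be a $K\times N$ circular Florentine rectangle over $\mathbb{Z}_N$ with rows $\pi_0,\dots,\pi_{K-1}$; put $g_{i,j}=\pi_i^{-1}(j)$. Let $T\ge1$, $P=N+T$, $L=NP$, $\mathcal{I}\subseteq\mathbb{Z}_P$ with $|\mathcal{I}|=T$, and $\mathbb{Z}_P\setminus\mathcal{I}=\{l_0<\dots<l_{N-1}\}$. Let $\mathcal{H}=(h_{c,s})_{0\le c,s<N}$ be a complex matrix with $|h_{c,s}|=1$ for all $c,s$ and $\sum_{s=0}^{N-1}h_{c_0,s}h^*_{c_1,s}=0$ for $c_0\ne c_1$ (e.g. the unnormalized DFT matrix). For $0\le i<K$, $0\le c<N$, define the $N\times P$ matrix $\mathcal{D}^i_c=(d^{i,c}_{j,k})$ by $d^{i,c}_{j,k}=\sqrt{P/N}\,\omega_N^{j g_{i,t}}h_{c,t}$ if $k=l_t$, and $d^{i,c}_{j,k}=0$ if $k\in\mathcal{I}$; let $\hat u^{i,c}_n=d^{i,c}_{r,s}$ with $r=\lfloor n/P\rfloor$, $s=n-Pr$ ($0\le n<L$), let $U^{i,c}$ be the time-domain sequence $u^{i,c}_t=\frac{1}{\sqrt L}\sum_{n=0}^{L-1}\hat u^{i,c}_n\omega_L^{nt}$, and let $\mathcal{U}^i=\{U^{i,c}:0\le c<N\}$. Then: (0) every $U^{i,c}$ is unimodular; (1) with $\Omega=\{s+aP:s\in\mathcal{I},a\in\mathbb{Z}_N\}$, $\hat u^{i,c}_n=0$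 for $n\in\Omega$ and $|\hat u^{i,c}_n|=\sqrt{P/N}$ for $n\notin\Omega$; (2) each $\mathcal{U}^i$ is an $(N,NP,N)$-ZCZ sequence set, i.e. $\theta_{U^{i,c}}(\tau)=0$ for $0<\tau<N$ and $\theta_{U^{i,c_0},U^{i,c_1}}(\tau)=0$ for $c_0\ne c_1$ and $0\le\tau<N$; in particular $NP-|\Omega|=N^2=MZ$ with $M=Z=N$; (3) $|\theta_{U^{i,c_0},U^{i',c_1}}(\tau)|=P=\frac{NP}{\sqrt{NP-|\Omega|}}$ for all $0\le i\ne i'<K$, all $0\le c_0,c_1<N$ and all $0\le\tau<L$.
   Context: $\omega_n=e^{2\pi\sqrt{-1}/n}$. An $M\times N$ circular Florentine rectangle (CFR) over $\mathbb{Z}_N$ is an $M\times N$ array whose rows $\pi_i:\mathbb{Z}_N\to\mathbb{Z}_N$ are permutations such that for every $m\in\mathbb{Z}_N\setminus\{0\}$ and all $i,j,x,y$: $(\pi_i(x),\pi_i(x+m))=(\pi_j(y),\pi_j(y+m))$ (indices mod $N$) iff $i=j$ and $x=y$. $\tilde F(N)$ is the largest $M$ for which an $M\times N$ CFR exists (for odd $N\ge3$, $\tilde F(N)\ge2$). $\pi_i^{-1}$ is the inverse permutation with values in $\{0,\dots,N-1\}$. Periodic correlation: $\theta_{C,D}(\tau)=\sum_{t=0}^{L-1}c_td^*_{\langle t+\tau\rangle_L}$, $\theta_C=\theta_{C,C}$. An $(M,L,Z)$-ZCZ set is a set of $M$ length-$L$ sequences whose autocorrelations vanish for $0<\tau<Z$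 and whose pairwise cross-correlations vanish for $0\le\tau<Z$. *)

theory Defs
  imports Complex_Main
begin

definition omega :: "nat \<Rightarrow> complex" where
  "omega n = cis (2 * pi / real n)"

definition pcorr :: "nat \<Rightarrow> (nat \<Rightarrow> complex) \<Rightarrow> (nat \<Rightarrow> complex) \<Rightarrow> nat \<Rightarrow> complex" where
  "pcorr L c d \<tau> = (\<Sum>t<L. c t * cnj (d ((t + \<tau>) mod L)))"

definition is_CFR :: "nat \<Rightarrow> nat \<Rightarrow> (nat \<Rightarrow> nat \<Rightarrow> nat) \<Rightarrow> bool" where
  "is_CFR M N \<pi> \<longleftrightarrow>
     (\<forall>i<M. bij_betw (\<pi> i) {..<N} {..<N}) \<and>
     (\<forall>m\<in>{1..<N}. \<forall>i<M. \<forall>j<M. \<forall>x<N. \<forall>y<N.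
        ((\<pi> i x, \<pi> i ((x + m) mod N)) = (\<pi> j y, \<pi> j ((y + m) mod N)))
          \<longleftrightarrow> (i = j \<and> x = y))"

definition Ftilde :: "nat \<Rightarrow> nat" where
  "Ftilde N = (GREATEST M. \<exists>\<pi>. is_CFR M N \<pi>)"

definition cfr_g :: "nat \<Rightarrow> (nat \<Rightarrow> nat \<Rightarrow> nat) \<Rightarrow> nat \<Rightarrow> nat \<Rightarrow> nat" where
  "cfr_g N \<pi> i j = inv_into {..<N} (\<pi> i) j"

definition lpos :: "nat \<Rightarrow> nat set \<Rightarrow> nat \<Rightarrow> nat" where
  "lpos P I t = sorted_list_of_set ({..<P} - I) ! t"

definition dent :: "nat \<Rightarrow> nat \<Rightarrow> nat set \<Rightarrow> (nat \<Rightarrow> nat \<Rightarrow> complex) \<Rightarrow> (nat \<Rightarrow> nat \<Rightarrow> nat)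
    \<Rightarrow> nat \<Rightarrow> nat \<Rightarrow> nat \<Rightarrow> nat \<Rightarrow> complex" where
  "dent N T I H \<pi> i c j k =
     (if k \<in> I then 0
      else (let P = N + T; t = (THE t. t < N \<and> lpos P I t = k) in
            complex_of_real (sqrt (real P / real N)) * omega N ^ (j * cfr_g N \<pi> i t) * H c t))"

definition uhat :: "nat \<Rightarrow> nat \<Rightarrow> nat set \<Rightarrow> (nat \<Rightarrow> nat \<Rightarrow> complex) \<Rightarrow> (nat \<Rightarrow> nat \<Rightarrow> nat)
    \<Rightarrow> nat \<Rightarrow> nat \<Rightarrow> nat \<Rightarrow> complex" where
  "uhat N T I H \<pi> i c n = dent N T I H \<pi> i c (n div (N + T)) (n mod (N + T))"

definition useq :: "nat \<Rightarrow> nat \<Rightarrow> nat set \<Rightarrow> (nat \<Rightarrow> nat \<Rightarrow> complex) \<Rightarrow> (nat \<Rightarrow> nat \<Rightarrow> nat)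
    \<Rightarrow> nat \<Rightarrow> nat \<Rightarrow> nat \<Rightarrow> complex" where
  "useq N T I H \<pi> i c t =
     (let L = N * (N + T) in
      complex_of_real (1 / sqrt (real L)) * (\<Sum>n<L. uhat N T I H \<pi> i c n * omega L ^ (n * t)))"

definition is_ZCZ :: "nat \<Rightarrow> nat \<Rightarrow> nat \<Rightarrow> (nat \<Rightarrow> nat \<Rightarrow> complex) \<Rightarrow> bool" where
  "is_ZCZ M L Z U \<longleftrightarrow>
     (\<forall>c<M. \<forall>\<tau>. 0 < \<tau> \<and> \<tau> < Z \<longrightarrow> pcorr L (U c) (U c) \<tau> = 0) \<and>
     (\<forall>c0<M. \<forall>c1<M. c0 \<noteq> c1 \<longrightarrow> (\<forall>\<tau><Z. pcorr L (U c0) (U c1) \<tau> = 0))"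

end

theory Submission
  imports Defs
begin
lemma omega_pow_n: "n > 0 \<Longrightarrow> omega n ^ n = 1"
  by (simp add: omega_def DeMoivre)

lemma omega_pow: "omega n ^ k = cis (real k * (2 * pi / real n))"
  by (simp add: omega_def DeMoivre)

lemma norm_omega_pow[simp]: "norm (omega n ^ k) = 1"
  by (simp add: omega_pow)

lemma omega_mod: "n > 0 \<Longrightarrow> omega n ^ a = omega n ^ (a mod n)"
proof -
  assume n: "n > 0"
  have "omega n ^ a = omega n ^ (n * (a div n)) * omega n ^ (a mod n)"
    by (metis power_add div_mult_mod_eq mult.commute)
  also have "\<dots> = (omega n ^ n) ^ (a div n) * omega n ^ (a mod n)"
    by (simp only: power_mult)
  finally show ?thesis using omega_pow_n[OF n] by simp
qed

lemma omega_eq: assumes "n > 0" "int n dvd (int a - int b)" shows "omega n ^ a = omega n ^ b"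
proof -
  have "int a mod int n = int b mod int n" using assms(2) by (simp add: mod_eq_dvd_iff)
  then have "a mod n = b mod n" by (metis of_nat_eq_iff of_nat_mod)
  then show ?thesis using omega_mod[OF assms(1)] by metis
qed

lemma omega_eq_1: assumes n: "n > 0" and h: "omega n ^ k = 1" shows "n dvd k"
proof -
  have "cos (real k * (2 * pi / real n)) = 1"
    using h unfolding omega_pow by (metis cis.sel(1) one_complex.sel(1))
  then obtain j :: int where j: "real k * (2 * pi / real n) = j * 2 * pi"
    by (auto simp: cos_one_2pi_int)
  then have "real k = j * real n" using n by (simp add: field_simps)
  then have "int k = j * int n" by (metis of_int_eq_iff of_int_mult of_int_of_nat_eq)
  then have "int n dvd int k" by simp
  then show ?thesis by simp
qed

lemma geom_omega: assumes n: "n > 0"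
  shows "(\<Sum>r<n. (omega n ^ k) ^ r) = (if n dvd k then of_nat n else 0)"
proof (cases "n dvd k")
  case True
  then have "omega n ^ k = 1" using omega_eq[OF n, of k 0] by (simp add: of_nat_dvd_iff)
  then show ?thesis using True by simp
next
  case False
  then have ne: "omega n ^ k \<noteq> 1" using omega_eq_1[OF n] by blast
  have "(omega n ^ k) ^ n = 1" by (metis omega_pow_n[OF n] power_mult power_mult_distrib mult.commute power_one)
  then show ?thesis using False ne by (simp add: geometric_sum)
qed

lemma cnj_omega: assumes n: "n > 0" shows "cnj (omega n ^ k) = omega n ^ (k * (n - 1))"
proof -
  have "cnj (omega n) = omega n ^ (n - 1)"
  proof -
    have "omega n ^ (n - 1) = cis (real (n - 1) * (2 * pi / real n))" by (rule omega_pow)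
    also have "real (n - 1) * (2 * pi / real n) = 2 * pi + (- (2 * pi / real n))"
      using n by (simp add: of_nat_diff field_simps)
    also have "cis \<dots> = cis (- (2 * pi / real n))" by (simp add: complex_eq_iff cos_diff sin_diff)
    finally show ?thesis by (simp add: omega_def cis_cnj)
  qed
  then show ?thesis by (simp add: power_mult[symmetric] mult.commute)
qed

lemma omega_mult: assumes "a > 0" "b > 0" shows "omega (a * b) ^ a = omega b"
proof -
  have "real a * (2 * pi / real (a * b)) = 2 * pi / real b" using assms by (simp add: field_simps)
  then show ?thesis by (simp add: omega_def DeMoivre)
qed

lemma dvd_mod: "int N dvd (int a - int (a mod N))"
  by (simp add: of_nat_mod mod_eq_dvd_iff[symmetric])

definition nu :: "nat \<Rightarrow> nat \<Rightarrow> nat" where "nu N t = (N - t mod N) mod N"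

lemma nu_lt: "N > 0 \<Longrightarrow> nu N t < N" by (simp add: nu_def)

lemma nu_dvd: assumes "N > 0" shows "int N dvd int (nu N t) + int t"
proof (cases "t mod N = 0")
  case True
  then have "nu N t = 0" by (simp add: nu_def)
  then show ?thesis using dvd_mod[of N t] True by simp
next
  case False
  then have "nu N t = N - t mod N" using assms by (simp add: nu_def)
  then have "int (nu N t) + int t = int N + (int t - int (t mod N))" using assms by (simp add: of_nat_diff)
  moreover have "int N dvd (int t - int (t mod N))" by (rule dvd_mod)
  ultimately show ?thesis using dvd_add[OF dvd_refl[of "int N"]] by metis
qed

lemma uniq_lt: assumes "a < N" "b < N" "int N dvd (int a - int b)" shows "a = b"
proof -
  have "int a mod int N = int b mod int N" using assms(3) by (simp add: mod_eq_dvd_iff)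
  then show ?thesis using assms by simp
qed

lemma sum_split: fixes N P :: nat and f :: "nat \<Rightarrow> 'a::comm_monoid_add"
  shows "(\<Sum>n<N*P. f n) = (\<Sum>r<N. \<Sum>s<P. f (r*P + s))"
proof -
  have "(\<Sum>n<N*P. f n) = (\<Sum>r<N. sum f {r*P..<r*P+P})" using sum.nat_group[of f P N] by simp
  also have "\<dots> = (\<Sum>r<N. \<Sum>s<P. f (r*P + s))"
  proof (rule sum.cong[OF refl])
    fix r
    show "sum f {r*P..<r*P+P} = (\<Sum>s<P. f (r*P + s))"
      using sum.shift_bounds_nat_ivl[of f 0 "r*P" P] by (simp add: atLeast0LessThan add.commute)
  qed
  finally show ?thesis .
qed

locale cfrset =
  fixes N T :: nat and I :: "nat set" and H :: "nat \<Rightarrow> nat \<Rightarrow> complex" and \<pi> :: "nat \<Rightarrow> nat \<Rightarrow> nat"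
  assumes Npos: "N > 0" and Isub: "I \<subseteq> {..<N+T}" and Icard: "card I = T"
begin

abbreviation "P \<equiv> N + T"
abbreviation "L \<equiv> N * (N + T)"
abbreviation "S \<equiv> {..<N + T} - I"
abbreviation "l \<equiv> lpos (N + T) I"

lemma finI: "finite I" using Isub finite_subset by blast

lemma cardS: "card S = N"
  using Isub Icard finI by (simp add: card_Diff_subset)

lemma lenS: "length (sorted_list_of_set S) = N" using cardS by simp

lemma distS: "distinct (sorted_list_of_set S)" by simp

lemma setS: "set (sorted_list_of_set S) = S" by simp

lemma l_in: "t < N \<Longrightarrow> l t \<in> S"
  unfolding lpos_def using lenS setS by (metis nth_mem)

lemma l_lt: "t < N \<Longrightarrow> l t < P" using l_in by auto

lemma l_notI: "t < N \<Longrightarrow> l t \<notin> I" using l_in by auto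

lemma l_inj: "t < N \<Longrightarrow> t' < N \<Longrightarrow> l t = l t' \<Longrightarrow> t = t'"
  unfolding lpos_def using lenS distS by (simp add: nth_eq_iff_index_eq)

lemma l_bij: "bij_betw l {..<N} S"
proof (rule bij_betw_imageI)
  show "inj_on l {..<N}" using l_inj by (auto simp: inj_on_def)
  show "l ` {..<N} = S"
  proof
    show "l ` {..<N} \<subseteq> S" using l_in by auto
    show "S \<subseteq> l ` {..<N}"
    proof
      fix s assume "s \<in> S"
      then obtain t where "t < N" "sorted_list_of_set S ! t = s"
        using setS lenS by (metis in_set_conv_nth)
      then show "s \<in> l ` {..<N}" by (auto simp: lpos_def)
    qed
  qed
qed

lemma l_surj: "s \<in> S \<Longrightarrow> \<exists>t<N. l t = s"
  using l_bij by (metis bij_betw_def imageE lessThan_iff)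

lemma the_l: "t < N \<Longrightarrow> (THE t'. t' < N \<and> l t' = l t) = t"
  by (rule the_equality) (auto dest: l_inj)

lemma dent_I: "k \<in> I \<Longrightarrow> dent N T I H \<pi> i c j k = 0"
  by (simp add: dent_def)

lemma dent_l: "t < N \<Longrightarrow> dent N T I H \<pi> i c j (l t) =
   complex_of_real (sqrt (real P / real N)) * omega N ^ (j * cfr_g N \<pi> i t) * H c t"
  using l_notI the_l by (simp add: dent_def Let_def)

lemma uhat_split: assumes "s < P" shows "uhat N T I H \<pi> i c (r * P + s) = dent N T I H \<pi> i c r s"
proof -
  have P0: "P \<noteq> 0" using assms by auto
  have "(s + r * P) div P = r + s div P" using div_mult_self1[OF P0] by blast
  then have "(r * P + s) div P = r" using assms by (simp add: add.commute)
  moreover have "(r * P + s) mod P = s" using assms by auto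
  ultimately
  show ?thesis by (simp add: uhat_def)
qed

lemma omegaLP: "omega L ^ P = omega N"
  using omega_mult[of P N] Npos by (simp add: mult.commute)

lemma omegaLN: "omega L ^ N = omega P"
  using omega_mult[of N P] Npos by simp

lemma coef: "complex_of_real (1 / sqrt (real L)) * (complex_of_real (sqrt (real P / real N)) * of_nat N) = 1"
proof -
  define a where "a = sqrt (real N)"
  define b where "b = sqrt (real P)"
  have a: "a > 0" using Npos by (simp add: a_def)
  have b: "b > 0" using Npos by (simp add: b_def)
  have e1: "sqrt (real L) = a * b" by (simp add: a_def b_def real_sqrt_mult)
  have e2: "sqrt (real P / real N) = b / a" by (simp add: a_def b_def real_sqrt_divide)
  have e3: "real N = a * a" by (simp add: a_def)
  have "1 / sqrt (real L) * (sqrt (real P / real N) * real N) = 1"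
    unfolding e1 e2 unfolding e3 using a b by (simp add: field_simps)
  then show ?thesis by (metis of_real_1 of_real_mult of_real_of_nat_eq)
qed

end

context cfrset begin

lemma exp_id: "omega N ^ (r * g) * omega L ^ ((r * P + m) * t0) = omega L ^ (m * t0) * (omega N ^ (g + t0)) ^ r"
proof -
  have "(r * P + m) * t0 = P * (r * t0) + m * t0" by (simp add: algebra_simps)
  then have "omega L ^ ((r * P + m) * t0) = (omega L ^ P) ^ (r * t0) * omega L ^ (m * t0)"
    by (simp only: power_add power_mult)
  also have "\<dots> = omega N ^ (r * t0) * omega L ^ (m * t0)" by (simp only: omegaLP)
  finally have e: "omega L ^ ((r * P + m) * t0) = omega N ^ (r * t0) * omega L ^ (m * t0)" .
  have "omega N ^ (r * g) * omega N ^ (r * t0) = (omega N ^ (g + t0)) ^ r"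
    by (simp only: power_add[symmetric] power_mult[symmetric] add_mult_distrib2 mult.commute)
  then show ?thesis unfolding e by (simp add: algebra_simps)
qed

context
  fixes i assumes bij: "bij_betw (\<pi> i) {..<N} {..<N}"
begin

lemma pi_lt: "x < N \<Longrightarrow> \<pi> i x < N" using bij by (auto simp: bij_betw_def)
lemma g_lt: "t < N \<Longrightarrow> cfr_g N \<pi> i t < N"
  using bij unfolding cfr_g_def by (metis bij_betw_def inv_into_into lessThan_iff)
lemma pi_g: "t < N \<Longrightarrow> \<pi> i (cfr_g N \<pi> i t) = t"
  using bij unfolding cfr_g_def by (metis bij_betw_def f_inv_into_f lessThan_iff)
lemma g_pi: "x < N \<Longrightarrow> cfr_g N \<pi> i (\<pi> i x) = x"
  using bij unfolding cfr_g_def by (metis bij_betw_def inv_into_f_f lessThan_iff)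

lemma dvd_iff: assumes t: "t < N"
  shows "(N dvd cfr_g N \<pi> i t + t0) \<longleftrightarrow> t = \<pi> i (nu N t0)"
proof
  assume "N dvd cfr_g N \<pi> i t + t0"
  then have d1: "int N dvd int (cfr_g N \<pi> i t) + int t0" by (metis of_nat_add of_nat_dvd_iff)
  have d2: "int N dvd int (nu N t0) + int t0" using nu_dvd Npos by blast
  have "int N dvd int (cfr_g N \<pi> i t) - int (nu N t0)" using dvd_diff[OF d1 d2] by simp
  then have "cfr_g N \<pi> i t = nu N t0" using uniq_lt g_lt[OF t] nu_lt[OF Npos] by blast
  then show "t = \<pi> i (nu N t0)" using pi_g[OF t] by metis
next
  assume "t = \<pi> i (nu N t0)"
  then have "cfr_g N \<pi> i t = nu N t0" using g_pi nu_lt[OF Npos] by blast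
  then show "N dvd cfr_g N \<pi> i t + t0" using nu_dvd[OF Npos, of t0] by (metis of_nat_add of_nat_dvd_iff)
qed

lemma closed: "useq N T I H \<pi> i c t0 = H c (\<pi> i (nu N t0)) * omega L ^ (l (\<pi> i (nu N t0)) * t0)"
proof -
  define s0 where "s0 = \<pi> i (nu N t0)"
  have s0: "s0 < N" unfolding s0_def using pi_lt nu_lt Npos by blast
  define sN where "sN = complex_of_real (sqrt (real P / real N))"
  define X where "X t = sN * H c t * omega L ^ (l t * t0)" for t
  have B: "(\<Sum>s<P. uhat N T I H \<pi> i c (r*P+s) * omega L ^ ((r*P+s)*t0)) =
           (\<Sum>t<N. X t * (omega N ^ (cfr_g N \<pi> i t + t0)) ^ r)" for r
  proof -
    have "(\<Sum>s<P. uhat N T I H \<pi> i c (r*P+s) * omega L ^ ((r*P+s)*t0)) =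
          (\<Sum>s<P. dent N T I H \<pi> i c r s * omega L ^ ((r*P+s)*t0))"
      by (rule sum.cong) (auto simp: uhat_split)
    also have "\<dots> = (\<Sum>s\<in>S. dent N T I H \<pi> i c r s * omega L ^ ((r*P+s)*t0))"
      by (rule sum.mono_neutral_right) (auto simp: dent_I)
    also have "\<dots> = (\<Sum>t<N. dent N T I H \<pi> i c r (l t) * omega L ^ ((r*P+l t)*t0))"
      by (rule sum.reindex_bij_betw[OF l_bij, symmetric])
    also have "\<dots> = (\<Sum>t<N. X t * (omega N ^ (cfr_g N \<pi> i t + t0)) ^ r)"
    proof (rule sum.cong[OF refl])
      fix t assume "t \<in> {..<N}"
      then have "dent N T I H \<pi> i c r (l t) = sN * omega N ^ (r * cfr_g N \<pi> i t) * H c t"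
        by (simp add: dent_l sN_def)
      then show "dent N T I H \<pi> i c r (l t) * omega L ^ ((r*P+l t)*t0) = X t * (omega N ^ (cfr_g N \<pi> i t + t0)) ^ r"
        using exp_id[of r "cfr_g N \<pi> i t" "l t" t0] by (simp add: X_def algebra_simps)
    qed
    finally show ?thesis .
  qed
  have "(\<Sum>n<L. uhat N T I H \<pi> i c n * omega L ^ (n * t0)) =
        (\<Sum>r<N. \<Sum>s<P. uhat N T I H \<pi> i c (r*P+s) * omega L ^ ((r*P+s)*t0))"
    by (rule sum_split)
  also have "\<dots> = (\<Sum>r<N. \<Sum>t<N. X t * (omega N ^ (cfr_g N \<pi> i t + t0)) ^ r)"
    using B by simp
  also have "\<dots> = (\<Sum>t<N. X t * (\<Sum>r<N. (omega N ^ (cfr_g N \<pi> i t + t0)) ^ r))"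
    by (subst sum.swap) (simp add: sum_distrib_left)
  also have "\<dots> = (\<Sum>t<N. if t = s0 then X t * of_nat N else 0)"
  proof (rule sum.cong[OF refl])
    fix t assume "t \<in> {..<N}"
    then show "X t * (\<Sum>r<N. (omega N ^ (cfr_g N \<pi> i t + t0)) ^ r) = (if t = s0 then X t * of_nat N else 0)"
      using dvd_iff[of t t0] geom_omega[OF Npos] by (simp add: s0_def)
  qed
  also have "\<dots> = X s0 * of_nat N" using s0 by simp
  finally have E: "(\<Sum>n<L. uhat N T I H \<pi> i c n * omega L ^ (n * t0)) = X s0 * of_nat N" .
  have "useq N T I H \<pi> i c t0 = complex_of_real (1 / sqrt (real L)) * (X s0 * of_nat N)"
    unfolding useq_def Let_def E ..
  also have "\<dots> = (complex_of_real (1 / sqrt (real L)) * (sN * of_nat N)) * (H c s0 * omega L ^ (l s0 * t0))"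
    by (simp add: X_def algebra_simps)
  also have "\<dots> = H c s0 * omega L ^ (l s0 * t0)" using coef by (simp add: sN_def)
  finally show ?thesis by (simp add: s0_def)
qed

end
end

lemma nu_cong: assumes "N > 0" "int N dvd (int a - int b)" shows "nu N a = nu N b"
proof -
  have "int N dvd (int (nu N a) + int a) - (int (nu N b) + int b)"
    using dvd_diff[OF nu_dvd[OF assms(1)] nu_dvd[OF assms(1)]] by blast
  then have "int N dvd (int (nu N a) - int (nu N b)) + (int a - int b)" by (simp add: algebra_simps)
  then have "int N dvd (int (nu N a) - int (nu N b))" using assms(2) by (simp add: dvd_add_left_iff)
  then show ?thesis using uniq_lt nu_lt[OF assms(1)] by blast
qed

lemma dvd_mod_mult: "int N dvd (int (x mod (N * P)) - int x)"
proof -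
  have "int (N * P) dvd (int x - int (x mod (N * P)))" by (rule dvd_mod)
  then have "int N dvd (int x - int (x mod (N * P)))" by (metis dvd_mult_left of_nat_mult)
  then show ?thesis by (metis dvd_minus_iff minus_diff_eq)
qed

lemma nu_mod: "N > 0 \<Longrightarrow> nu N (x mod (N * P)) = nu N x"
  using nu_cong dvd_mod_mult by blast

lemma nu_aNb: assumes "N > 0" shows "nu N (a * N + b) = nu N b"
  using assms by (intro nu_cong) (auto simp: algebra_simps)

lemma expE: assumes M: "M = N * P" and N: "N > 0" and P: "P > 0"
  shows "omega M ^ (m * (a * N + b)) * omega M ^ (m' * ((a * N + b + \<tau>) mod M) * q)
       = omega M ^ (m * b + m' * (b + \<tau>) * q) * (omega P ^ (m + m' * q)) ^ a"
proof -
  have M0: "M > 0" using M N P by simp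
  have oN: "omega M ^ N = omega P" using omega_mult[OF N P] M by simp
  have r: "omega M ^ (m * b + m' * (b + \<tau>) * q) * (omega P ^ (m + m' * q)) ^ a
        = omega M ^ (m * b + m' * (b + \<tau>) * q + N * ((m + m' * q) * a))"
    unfolding oN[symmetric] by (simp only: power_add power_mult)
  define x where "x = a * N + b + \<tau>"
  have d0: "int M dvd (int x - int (x mod M))" by (rule dvd_mod)
  have d: "int M dvd (int (x mod M) - int x)" using d0 by (simp add: dvd_diff_commute)
  have "int (m * (a * N + b) + m' * (x mod M) * q) - int (m * b + m' * (b + \<tau>) * q + N * ((m + m' * q) * a))
     = int m' * int q * (int (x mod M) - int x)"
    by (simp add: x_def algebra_simps)
  then have "int M dvd int (m * (a * N + b) + m' * (x mod M) * q) - int (m * b + m' * (b + \<tau>) * q + N * ((m + m' * q) * a))"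
    using d by (simp add: dvd_mult)
  then have "omega M ^ (m * (a * N + b) + m' * (x mod M) * q) = omega M ^ (m * b + m' * (b + \<tau>) * q + N * ((m + m' * q) * a))"
    by (rule omega_eq[OF M0])
  then show ?thesis unfolding r by (simp add: x_def power_add)
qed

lemma Pdvd: fixes M N P m m' :: nat assumes M: "M = N * P" "M > 0" and m: "m < P" "m' < P"
  shows "P dvd (m + m' * (M - 1)) \<longleftrightarrow> m = m'"
proof -
  obtain M1 where M1: "M = Suc M1" using M(2) by (cases M) auto
  have i1: "int (M - 1) = int M - 1" using M(2) by (simp add: of_nat_diff)
  have e0: "int (m + m' * (M - 1)) = int m + int m' * (int M - 1)" by (simp only: of_nat_add of_nat_mult i1)
  have e1: "int m + int m' * (int M - 1) = (int m - int m') + int m' * int N * int P"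
    unfolding M(1) by (simp add: algebra_simps)
  have e: "int (m + m' * (M - 1)) = (int m - int m') + int m' * int N * int P"
    using e0 e1 by simp
  have "P dvd (m + m' * (M - 1)) \<longleftrightarrow> int P dvd int (m + m' * (M - 1))" by (simp only: of_nat_dvd_iff)
  also have "\<dots> \<longleftrightarrow> int P dvd (int m - int m')" unfolding e
    by (simp add: dvd_add_left_iff)
  also have "\<dots> \<longleftrightarrow> m = m'"
  proof
    assume "int P dvd (int m - int m')" then show "m = m'" using uniq_lt[OF m] by blast
  qed simp
  finally show ?thesis .
qed

lemma step5: assumes "M > 0"
  shows "omega M ^ (m * b + m * (b + \<tau>) * (M - 1)) = omega M ^ (m * \<tau> * (M - 1))"
proof (rule omega_eq[OF assms])
  obtain M1 where M1: "M = Suc M1" using assms by (cases M) auto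
  have "int (m * b + m * (b + \<tau>) * (M - 1)) - int (m * \<tau> * (M - 1)) = int M * (int m * int b)"
    unfolding M1 by (simp add: algebra_simps)
  then show "int M dvd int (m * b + m * (b + \<tau>) * (M - 1)) - int (m * \<tau> * (M - 1))" by simp
qed

context cfrset begin

lemma Lpos: "L > 0" using Npos by simp
lemma Ppos: "P > 0" using Npos by simp

lemma corr_gen:
  assumes bi: "bij_betw (\<pi> i) {..<N} {..<N}" and bi': "bij_betw (\<pi> i') {..<N} {..<N}"
  shows "pcorr L (useq N T I H \<pi> i c) (useq N T I H \<pi> i' c') \<tau> =
   (\<Sum>b<N. if \<pi> i (nu N b) = \<pi> i' (nu N (b + \<tau>))
      then of_nat P * (H c (\<pi> i (nu N b)) * cnj (H c' (\<pi> i (nu N b))) * omega L ^ (l (\<pi> i (nu N b)) * \<tau> * (L - 1)))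
      else 0)"
proof -
  define s where "s t = \<pi> i (nu N t)" for t
  define s' where "s' t = \<pi> i' (nu N t)" for t
  have slt: "s t < N" for t unfolding s_def using pi_lt[OF bi] nu_lt[OF Npos] by blast
  have slt': "s' t < N" for t unfolding s'_def using pi_lt[OF bi'] nu_lt[OF Npos] by blast
  have U: "useq N T I H \<pi> i c t = H c (s t) * omega L ^ (l (s t) * t)" for t
    unfolding s_def by (rule closed[OF bi])
  have U': "cnj (useq N T I H \<pi> i' c' x) = cnj (H c' (s' x)) * omega L ^ (l (s' x) * x * (L - 1))" for x
    unfolding s'_def closed[OF bi'] by (simp only: complex_cnj_mult cnj_omega[OF Lpos])
  define C where "C b = H c (s b) * cnj (H c' (s' (b + \<tau>))) * omega L ^ (l (s b) * b + l (s' (b + \<tau>)) * (b + \<tau>) * (L - 1))" for b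
  define e where "e b = l (s b) + l (s' (b + \<tau>)) * (L - 1)" for b
  have "pcorr L (useq N T I H \<pi> i c) (useq N T I H \<pi> i' c') \<tau> =
        (\<Sum>t<P * N. useq N T I H \<pi> i c t * cnj (useq N T I H \<pi> i' c' ((t + \<tau>) mod L)))"
    unfolding pcorr_def by (simp only: mult.commute)
  also have "\<dots> = (\<Sum>a<P. \<Sum>b<N. useq N T I H \<pi> i c (a * N + b) * cnj (useq N T I H \<pi> i' c' ((a * N + b + \<tau>) mod L)))"
    by (rule sum_split)
  also have "\<dots> = (\<Sum>a<P. \<Sum>b<N. C b * (omega P ^ e b) ^ a)"
  proof (intro sum.cong refl)
    fix a b
    have s1: "s (a * N + b) = s b" unfolding s_def using nu_aNb[OF Npos] by simp
    have s2: "s' ((a * N + b + \<tau>) mod L) = s' (b + \<tau>)" unfolding s'_def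
      using nu_mod[OF Npos, of "a * N + b + \<tau>" P] nu_aNb[OF Npos, of a "b + \<tau>"] by (simp add: add.assoc)
    have "useq N T I H \<pi> i c (a * N + b) * cnj (useq N T I H \<pi> i' c' ((a * N + b + \<tau>) mod L))
       = H c (s b) * cnj (H c' (s' (b + \<tau>))) * (omega L ^ (l (s b) * (a * N + b)) * omega L ^ (l (s' (b + \<tau>)) * ((a * N + b + \<tau>) mod L) * (L - 1)))"
      unfolding U U' s1 s2 by (simp add: algebra_simps)
    also have "\<dots> = C b * (omega P ^ e b) ^ a"
      unfolding expE[OF refl Npos Ppos] C_def e_def by (simp add: algebra_simps)
    finally show "useq N T I H \<pi> i c (a * N + b) * cnj (useq N T I H \<pi> i' c' ((a * N + b + \<tau>) mod L)) = C b * (omega P ^ e b) ^ a" .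
  qed
  also have "\<dots> = (\<Sum>b<N. C b * (\<Sum>a<P. (omega P ^ e b) ^ a))"
    by (subst sum.swap) (simp add: sum_distrib_left)
  also have "\<dots> = (\<Sum>b<N. if s b = s' (b + \<tau>)
      then of_nat P * (H c (s b) * cnj (H c' (s b)) * omega L ^ (l (s b) * \<tau> * (L - 1))) else 0)"
  proof (intro sum.cong refl)
    fix b
    have iff: "P dvd e b \<longleftrightarrow> s b = s' (b + \<tau>)"
    proof -
      have "P dvd e b \<longleftrightarrow> l (s b) = l (s' (b + \<tau>))"
        unfolding e_def by (rule Pdvd[OF refl Lpos l_lt[OF slt] l_lt[OF slt']])
      also have "\<dots> \<longleftrightarrow> s b = s' (b + \<tau>)" using l_inj[OF slt slt'] by metis
      finally show ?thesis .
    qed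
    show "C b * (\<Sum>a<P. (omega P ^ e b) ^ a) = (if s b = s' (b + \<tau>)
      then of_nat P * (H c (s b) * cnj (H c' (s b)) * omega L ^ (l (s b) * \<tau> * (L - 1))) else 0)"
    proof (cases "s b = s' (b + \<tau>)")
      case True
      then have "C b = H c (s b) * cnj (H c' (s b)) * omega L ^ (l (s b) * \<tau> * (L - 1))"
        unfolding C_def using step5[OF Lpos, of "l (s b)" b \<tau>] by simp
      then show ?thesis using True iff geom_omega[OF Ppos, of "e b"] by (simp add: algebra_simps)
    next
      case False
      then show ?thesis using iff geom_omega[OF Ppos, of "e b"] by simp
    qed
  qed
  finally show ?thesis unfolding s_def s'_def .
qed

end

lemma nu_inj_dvd: assumes "N > 0" "nu N a = nu N b" shows "int N dvd int a - int b"
proof -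
  have "int N dvd (int (nu N a) + int a) - (int (nu N b) + int b)"
    using dvd_diff[OF nu_dvd[OF assms(1)] nu_dvd[OF assms(1)]] by blast
  then show ?thesis using assms(2) by simp
qed

lemma mod_from_dvd: assumes "c < N" "int N dvd int a - int c" shows "a mod N = c"
proof -
  have N: "N > 0" using assms by simp
  have "int N dvd (int a - int c) - (int a - int (a mod N))" using dvd_diff[OF assms(2) dvd_mod] by blast
  then have "int N dvd int (a mod N) - int c" by simp
  then show ?thesis using uniq_lt[of "a mod N" N c] assms N by simp
qed

lemma nu_bij: assumes "N > 0" shows "bij_betw (nu N) {..<N} {..<N}"
proof -
  have inj: "inj_on (nu N) {..<N}"
    using nu_inj_dvd[OF assms] uniq_lt by (auto simp: inj_on_def)
  have "nu N ` {..<N} \<subseteq> {..<N}" using nu_lt[OF assms] by auto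
  then have "nu N ` {..<N} = {..<N}" using endo_inj_surj inj by blast
  then show ?thesis using inj by (simp add: bij_betw_def)
qed

context cfrset begin

lemma useq_norm: assumes bi: "bij_betw (\<pi> i) {..<N} {..<N}" and Hn: "\<forall>c<N. \<forall>s<N. norm (H c s) = 1"
  and c: "c < N" shows "norm (useq N T I H \<pi> i c t) = 1"
proof -
  have "\<pi> i (nu N t) < N" using pi_lt[OF bi] nu_lt[OF Npos] by blast
  then show ?thesis unfolding closed[OF bi] using Hn c by (simp add: norm_mult)
qed

definition Om where "Om = {s + a * (N + T) | s a. s \<in> I \<and> a < N}"

lemma Om_mem: assumes "n < L" shows "n \<in> Om \<longleftrightarrow> n mod P \<in> I"
proof
  assume "n \<in> Om"
  then obtain s a where "n = s + a * P" "s \<in> I" by (auto simp: Om_def)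
  moreover then have "s < P" using Isub by auto
  ultimately show "n mod P \<in> I" by simp
next
  assume h: "n mod P \<in> I"
  have "n div P < N" using div_less_iff_less_mult[OF Ppos, of n N] assms by simp
  moreover have "n = n mod P + (n div P) * P" by (metis mod_div_mult_eq)
  ultimately show "n \<in> Om" using h unfolding Om_def by blast
qed

lemma uhat_props: assumes n: "n < L" and Hn: "\<forall>c<N. \<forall>s<N. norm (H c s) = 1" and c: "c < N"
  shows "(n \<in> Om \<longrightarrow> uhat N T I H \<pi> i c n = 0) \<and>
         (n \<notin> Om \<longrightarrow> norm (uhat N T I H \<pi> i c n) = sqrt (real P / real N))"
proof (intro conjI impI)
  assume "n \<in> Om"
  then show "uhat N T I H \<pi> i c n = 0" using Om_mem[OF n] by (simp add: uhat_def dent_I)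
next
  assume "n \<notin> Om"
  then have "n mod P \<in> S" using Om_mem[OF n] Npos by auto
  then obtain t where t: "t < N" "l t = n mod P" using l_surj by blast
  have "uhat N T I H \<pi> i c n = complex_of_real (sqrt (real P / real N)) * omega N ^ ((n div P) * cfr_g N \<pi> i t) * H c t"
    unfolding uhat_def t(2)[symmetric] by (rule dent_l[OF t(1)])
  then show "norm (uhat N T I H \<pi> i c n) = sqrt (real P / real N)"
    using Hn c t(1) by (simp add: norm_mult)
qed

lemma Om_card: "card Om = N * T"
proof -
  have e: "Om = (\<lambda>(s, a). s + a * P) ` (I \<times> {..<N})" unfolding Om_def by auto
  have "inj_on (\<lambda>(s, a). s + a * P) (I \<times> {..<N})"
  proof (rule inj_onI, clarsimp)
    fix s a s' a' assume h: "s \<in> I" "s' \<in> I" "s + a * P = s' + a' * P"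
    then have lt: "s < P" "s' < P" using Isub by auto
    have "(s + a * P) mod P = s" using lt by simp
    moreover have "(s' + a' * P) mod P = s'" using lt by simp
    ultimately have ss: "s = s'" using h(3) by simp
    then have "a * P = a' * P" using h(3) by simp
    then have "a = a'" using Ppos by auto
    then show "s = s' \<and> a = a'" using ss by simp
  qed
  then have "card Om = card (I \<times> {..<N})" unfolding e by (rule card_image)
  also have "\<dots> = T * N" using Icard finI by (simp add: card_cartesian_product)
  finally show ?thesis by simp
qed

end

context cfrset begin

lemma noshift: assumes bi: "bij_betw (\<pi> i) {..<N} {..<N}" and t: "0 < \<tau>" "\<tau> < N"
  shows "\<pi> i (nu N b) \<noteq> \<pi> i (nu N (b + \<tau>))"
proof
  assume "\<pi> i (nu N b) = \<pi> i (nu N (b + \<tau>))"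
  then have "nu N b = nu N (b + \<tau>)"
    using bij_betw_imp_inj_on[OF bi] nu_lt[OF Npos] by (meson inj_onD lessThan_iff)
  then have "int N dvd int b - int (b + \<tau>)" by (rule nu_inj_dvd[OF Npos])
  then have "int N dvd int \<tau>" by (metis add_diff_cancel_left' diff_diff_eq2 diff_zero dvd_minus_iff minus_diff_eq of_nat_add)
  then have "N dvd \<tau>" by simp
  then show False using t by (auto dest: dvd_imp_le)
qed

lemma zcz: assumes bi: "bij_betw (\<pi> i) {..<N} {..<N}"
  and Ho: "\<forall>c0<N. \<forall>c1<N. c0 \<noteq> c1 \<longrightarrow> (\<Sum>s<N. H c0 s * cnj (H c1 s)) = 0"
  shows "is_ZCZ N L N (useq N T I H \<pi> i)"
  unfolding is_ZCZ_def
proof (intro conjI allI impI)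
  fix c \<tau> assume "c < N" "0 < \<tau> \<and> \<tau> < N"
  then show "pcorr L (useq N T I H \<pi> i c) (useq N T I H \<pi> i c) \<tau> = 0"
    unfolding corr_gen[OF bi bi] using noshift[OF bi] by simp
next
  fix c0 c1 \<tau> assume c: "c0 < N" "c1 < N" "c0 \<noteq> c1" "\<tau> < N"
  show "pcorr L (useq N T I H \<pi> i c0) (useq N T I H \<pi> i c1) \<tau> = 0"
  proof (cases "\<tau> = 0")
    case True
    have bb: "bij_betw (\<lambda>b. \<pi> i (nu N b)) {..<N} {..<N}"
      using bij_betw_trans[OF nu_bij[OF Npos] bi] by (simp add: comp_def)
    have "(\<Sum>b<N. H c0 (\<pi> i (nu N b)) * cnj (H c1 (\<pi> i (nu N b)))) = (\<Sum>s<N. H c0 s * cnj (H c1 s))"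
      by (rule sum.reindex_bij_betw[OF bb, of "\<lambda>s. H c0 s * cnj (H c1 s)"])
    also have "\<dots> = 0" using Ho c by blast
    finally have z: "(\<Sum>b<N. H c0 (\<pi> i (nu N b)) * cnj (H c1 (\<pi> i (nu N b)))) = 0" .
    show ?thesis unfolding corr_gen[OF bi bi] True
      by (simp add: sum_distrib_left[symmetric] z)
  next
    case False
    then show ?thesis unfolding corr_gen[OF bi bi] using noshift[OF bi, of \<tau>] c by simp
  qed
qed

end

lemma dvd4: "(k::int) dvd a \<Longrightarrow> k dvd b \<Longrightarrow> k dvd c \<Longrightarrow> k dvd d \<Longrightarrow> x = a - b + c + d \<Longrightarrow> k dvd x"
  by simp

context cfrset begin

lemma cross:
  assumes bi: "bij_betw (\<pi> i) {..<N} {..<N}" and bi': "bij_betw (\<pi> i') {..<N} {..<N}"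
  and neq: "i \<noteq> i'"
  and cfr: "\<forall>m\<in>{1..<N}. \<forall>x<N. \<forall>y<N. (\<pi> i x, \<pi> i ((x + m) mod N)) = (\<pi> i' y, \<pi> i' ((y + m) mod N)) \<longrightarrow> i = i'"
  and Hn: "\<forall>c<N. \<forall>s<N. norm (H c s) = 1" and c: "c0 < N" "c1 < N"
  shows "norm (pcorr L (useq N T I H \<pi> i c0) (useq N T I H \<pi> i' c1) \<tau>) = real P"
proof -
  define g' where "g' y = cfr_g N \<pi> i' y" for y
  define D where "D b = (g' (\<pi> i (nu N b)) + b) mod N" for b
  have xlt: "nu N b < N" for b using nu_lt[OF Npos] .
  have pxlt: "\<pi> i (nu N b) < N" for b using pi_lt[OF bi] xlt by blast
  have ylt: "g' (\<pi> i (nu N b)) < N" for b unfolding g'_def using g_lt[OF bi'] pxlt by blast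
  have piy: "\<pi> i' (g' (\<pi> i (nu N b))) = \<pi> i (nu N b)" for b unfolding g'_def using pi_g[OF bi'] pxlt by blast
  have condD: "\<pi> i (nu N b) = \<pi> i' (nu N (b + \<tau>)) \<longleftrightarrow> D b = nu N \<tau>" for b
  proof -
    define y where "y = g' (\<pi> i (nu N b))"
    have "\<pi> i (nu N b) = \<pi> i' (nu N (b + \<tau>)) \<longleftrightarrow> y = nu N (b + \<tau>)"
    proof
      assume "\<pi> i (nu N b) = \<pi> i' (nu N (b + \<tau>))"
      then show "y = nu N (b + \<tau>)" unfolding y_def g'_def using g_pi[OF bi'] xlt by metis
    next
      assume "y = nu N (b + \<tau>)"
      then show "\<pi> i (nu N b) = \<pi> i' (nu N (b + \<tau>))" using piy y_def by metis
    qed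
    also have "\<dots> \<longleftrightarrow> D b = nu N \<tau>"
    proof
      assume h: "y = nu N (b + \<tau>)"
      have "int N dvd int (y + b) - int (nu N \<tau>)"
        by (rule dvd4[OF nu_dvd[OF Npos, of "b + \<tau>"] nu_dvd[OF Npos, of \<tau>] dvd_0_right dvd_0_right])
           (simp add: h)
      then show "D b = nu N \<tau>" unfolding D_def y_def[symmetric] using mod_from_dvd xlt by blast
    next
      assume h: "D b = nu N \<tau>"
      have "int N dvd int (y + b) - int (nu N \<tau>)"
        using dvd_mod[of N "y + b"] h unfolding D_def y_def by simp
      then have "int N dvd int y - int (nu N (b + \<tau>))"
        by (rule dvd4[OF _ nu_dvd[OF Npos, of "b + \<tau>"] nu_dvd[OF Npos, of \<tau>] dvd_0_right]) simp
      then show "y = nu N (b + \<tau>)" using uniq_lt xlt ylt y_def by blast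
    qed
    finally show ?thesis .
  qed
  have Dinj: "inj_on D {..<N}"
  proof (rule inj_onI, rule ccontr)
    fix b1 b2 assume b: "b1 \<in> {..<N}" "b2 \<in> {..<N}" "D b1 = D b2" "b1 \<noteq> b2"
    define x1 where "x1 = nu N b1"
    define x2 where "x2 = nu N b2"
    define y1 where "y1 = g' (\<pi> i x1)"
    define y2 where "y2 = g' (\<pi> i x2)"
    have x1: "x1 < N" and x2: "x2 < N" unfolding x1_def x2_def using xlt by auto
    have y1: "y1 < N" and y2: "y2 < N" unfolding y1_def y2_def x1_def x2_def using ylt by auto
    have h1: "int N dvd int (y1 + b1) - int (y2 + b2)"
      by (rule dvd4[OF dvd_mod[of N "y1 + b1"] dvd_mod[of N "y2 + b2"] dvd_0_right dvd_0_right])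
         (use b(3) in \<open>simp add: D_def y1_def y2_def x1_def x2_def\<close>)
    have h2: "int N dvd int x1 + int b1" unfolding x1_def using nu_dvd[OF Npos] .
    have h3: "int N dvd int x2 + int b2" unfolding x2_def using nu_dvd[OF Npos] .
    have xne: "x1 \<noteq> x2"
    proof
      assume "x1 = x2"
      then have "int N dvd int b1 - int b2" using nu_inj_dvd[OF Npos] x1_def x2_def by metis
      then show False using uniq_lt b by auto
    qed
    define m where "m = (x2 + N - x1) mod N"
    have mlt: "m < N" unfolding m_def using Npos by simp
    have hm: "int N dvd int (x2 + N - x1) - int m" unfolding m_def by (rule dvd_mod)
    have A: "int N dvd int x1 + int m - int x2"
      by (rule dvd4[OF dvd_refl hm dvd_0_right dvd_0_right]) (use x1 in \<open>simp add: of_nat_diff\<close>)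
    have B: "int N dvd int y1 + int m - int y2"
      by (rule dvd4[OF h1 h2 h3 A]) simp
    have m0: "m \<noteq> 0"
    proof
      assume "m = 0"
      then have "int N dvd int x1 - int x2" using A by simp
      then show False using uniq_lt x1 x2 xne by blast
    qed
    have xm: "(x1 + m) mod N = x2" by (rule mod_from_dvd[OF x2]) (use A in simp)
    have ym: "(y1 + m) mod N = y2" by (rule mod_from_dvd[OF y2]) (use B in simp)
    have p1: "\<pi> i' y1 = \<pi> i x1" unfolding y1_def x1_def using piy by simp
    have p2: "\<pi> i' y2 = \<pi> i x2" unfolding y2_def x2_def using piy by simp
    have "m \<in> {1..<N}" using m0 mlt by simp
    then have "(\<pi> i x1, \<pi> i ((x1 + m) mod N)) = (\<pi> i' y1, \<pi> i' ((y1 + m) mod N)) \<longrightarrow> i = i'"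
      using cfr x1 y1 by blast
    then show False using xm ym p1 p2 neq by simp
  qed
  have "D ` {..<N} \<subseteq> {..<N}" unfolding D_def using Npos by auto
  then have "D ` {..<N} = {..<N}" using endo_inj_surj Dinj by blast
  then obtain b0 where b0: "b0 < N" "D b0 = nu N \<tau>" using xlt by (metis imageE lessThan_iff)
  have un: "b < N \<Longrightarrow> (\<pi> i (nu N b) = \<pi> i' (nu N (b + \<tau>))) \<longleftrightarrow> b = b0" for b
    using condD b0 Dinj by (metis inj_onD lessThan_iff)
  define F where "F b = of_nat P * (H c0 (\<pi> i (nu N b)) * cnj (H c1 (\<pi> i (nu N b))) * omega L ^ (l (\<pi> i (nu N b)) * \<tau> * (L - 1)))" for b
  have "pcorr L (useq N T I H \<pi> i c0) (useq N T I H \<pi> i' c1) \<tau> = (\<Sum>b<N. if b = b0 then F b else 0)"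
    unfolding corr_gen[OF bi bi'] F_def by (rule sum.cong) (auto simp: un)
  also have "\<dots> = F b0" using b0 by simp
  finally have "pcorr L (useq N T I H \<pi> i c0) (useq N T I H \<pi> i' c1) \<tau> = F b0" .
  moreover have "norm (F b0) = real P" unfolding F_def using Hn c pxlt by (simp add: norm_mult del: of_nat_add)
  ultimately show ?thesis by simp
qed

end

theorem theorem7:
  fixes N T K :: nat and \<pi> :: "nat \<Rightarrow> nat \<Rightarrow> nat" and I :: "nat set"
    and H :: "nat \<Rightarrow> nat \<Rightarrow> complex"
  assumes N3: "N \<ge> 3" and Nodd: "odd N"
    and K_def: "K = Ftilde N"
    and CFR: "is_CFR K N \<pi>"
    and T1: "T \<ge> 1"
    and I_sub: "I \<subseteq> {..<N + T}" and I_card: "card I = T"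
    and H_unim: "\<forall>c<N. \<forall>s<N. norm (H c s) = 1"
    and H_orth: "\<forall>c0<N. \<forall>c1<N. c0 \<noteq> c1 \<longrightarrow> (\<Sum>s<N. H c0 s * cnj (H c1 s)) = 0"
  shows
    "(\<forall>i<K. \<forall>c<N. \<forall>t<N * (N + T). norm (useq N T I H \<pi> i c t) = 1)
     \<and> (\<forall>i<K. \<forall>c<N. \<forall>n<N * (N + T).
          (n \<in> {s + a * (N + T) | s a. s \<in> I \<and> a < N} \<longrightarrow> uhat N T I H \<pi> i c n = 0) \<and>
          (n \<notin> {s + a * (N + T) | s a. s \<in> I \<and> a < N} \<longrightarrow>
             norm (uhat N T I H \<pi> i c n) = sqrt (real (N + T) / real N)))
     \<and> (\<forall>i<K. is_ZCZ N (N * (N + T)) N (useq N T I H \<pi> i))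
     \<and> N * (N + T) - card {s + a * (N + T) | s a. s \<in> I \<and> a < N} = N ^ 2
     \<and> (\<forall>i<K. \<forall>i'<K. i \<noteq> i' \<longrightarrow> (\<forall>c0<N. \<forall>c1<N. \<forall>\<tau><N * (N + T).
          norm (pcorr (N * (N + T)) (useq N T I H \<pi> i c0) (useq N T I H \<pi> i' c1) \<tau>)
            = real (N + T)
          \<and> real (N + T) = real (N * (N + T))
              / sqrt (real (N * (N + T) - card {s + a * (N + T) | s a. s \<in> I \<and> a < N}))))"
proof -
  have Npos: "N > 0" using N3 by simp
  interpret cfrset N T I H \<pi> using Npos I_sub I_card by unfold_locales auto
  have bij: "i < K \<Longrightarrow> bij_betw (\<pi> i) {..<N} {..<N}" for i using CFR unfolding is_CFR_def by blast
  have cfr2: "\<forall>m\<in>{1..<N}. \<forall>x<N. \<forall>y<N. (\<pi> i x, \<pi> i ((x + m) mod N)) = (\<pi> i' y, \<pi> i' ((y + m) mod N)) \<longrightarrow> i = i'"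
    if "i < K" "i' < K" for i i' using CFR that unfolding is_CFR_def by blast
  have OmE: "{s + a * (N + T) | s a. s \<in> I \<and> a < N} = Om" by (simp add: Om_def)
  have cardE: "N * (N + T) - card {s + a * (N + T) | s a. s \<in> I \<and> a < N} = N ^ 2"
    unfolding OmE Om_card by (simp add: algebra_simps power2_eq_square)
  have realE: "real (N + T) = real (N * (N + T)) / sqrt (real (N * (N + T) - card {s + a * (N + T) | s a. s \<in> I \<and> a < N}))"
    unfolding cardE using Npos by simp
  show ?thesis
    unfolding cardE[unfolded OmE] OmE
    using useq_norm[OF bij H_unim] uhat_props[OF _ H_unim] zcz[OF bij H_orth]
      cross[OF bij bij _ cfr2 H_unim] realE[unfolded cardE OmE]
    by auto
qed

end
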